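(* Let $n\ge2$ and $\mu\in(0,\frac1n(\frac{n-1}{n})^{n-1}]$. Let $f>0$ be a solution on $\mathbb{R}$ of $$\mu=\frac{f(x)^{n-1}}{(1+f'(x)^2)^{1/2}}-f(x)^n,$$ and let $V=n\bigl(1+(n-1)\mu^2f^{-2n}\bigr)$. Then for every $x\in\mathbb{R}$, $V(x)f(x)^2\le n^2$.
   Context: The function $f$ is the profile of the Euclidean Delaunay unduloid $\mathcal{D}(\mu)$, parametrized by $(x,\omega)\mapsto(x,f(x)\omega)$, with constant mean curvature $1$. The function $V=\|B\|^2$ is the potential of its stability operator $\Delta-V$. The function $f$ takes values between the two positive roots $a_-(\mu)\le a_+(\mu)$ of $X^n-X^{n-1}+\mu=0$. *)

theory Defs
  imports Complex_Main
begin

end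

theory Submission
  imports Defs
begin

theorem lemma3p1:
  fixes n :: nat and \<mu> :: real and f f' :: "real \<Rightarrow> real"
  assumes n: "n \<ge> 2"
    and mu_pos: "0 < \<mu>"
    and mu_le: "\<mu> \<le> (1 / real n) * ((real n - 1) / real n) ^ (n - 1)"
    and f_pos: "\<And>x. f x > 0"
    and f_deriv: "\<And>x. (f has_real_derivative f' x) (at x)"
    and ode: "\<And>x. \<mu> = f x ^ (n - 1) / sqrt (1 + (f' x)\<^sup>2) - f x ^ n"
  shows "\<forall>x. real n * (1 + (real n - 1) * \<mu>\<^sup>2 / f x ^ (2 * n)) * (f x)\<^sup>2 \<le> (real n)\<^sup>2"
proof
  fix x
  define a where "a = f x"
  define p where "p = a ^ (n - 1)"
  define s where "s = sqrt (1 + (f' x)\<^sup>2)"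
  have a0: "a > 0" using f_pos a_def by simp
  have p0: "p > 0" using a0 p_def by simp
  have s1: "s \<ge> 1" unfolding s_def by simp
  have an: "a ^ n = a * p" unfolding p_def using n
    by (metis Suc_diff_1 less_le_trans pos2 power_Suc)
  have a2n: "a ^ (2 * n) = a\<^sup>2 * p\<^sup>2" using an
    by (metis mult.commute power_mult power_mult_distrib)
  have "p / s \<le> p" using s1 p0 by (simp add: divide_le_eq)
  hence mu: "\<mu> \<le> p * (1 - a)" using ode[of x] an
    unfolding a_def[symmetric] p_def[symmetric] s_def[symmetric] by (simp add: algebra_simps)
  have a1: "a < 1"
  proof (rule ccontr)
    assume "\<not> a < 1"
    hence "p * (1 - a) \<le> 0" using p0 by (simp add: mult_nonneg_nonpos)
    thus False using mu mu_pos by linarith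
  qed
  have q: "\<mu> / p \<le> 1 - a" using mu p0 by (simp add: divide_le_eq mult.commute)
  have q0: "\<mu> / p \<ge> 0" using mu_pos p0 by simp
  have q2: "(\<mu> / p)\<^sup>2 \<le> 1" using q q0 a0
  proof -
    have "\<mu> / p \<le> 1" using q a0 by linarith
    thus ?thesis using q0 by (simp add: power_le_one)
  qed
  have aa: "a\<^sup>2 \<le> 1" using a0 a1 by (simp add: power_le_one)
  have eq: "real n * (1 + (real n - 1) * \<mu>\<^sup>2 / a ^ (2 * n)) * a\<^sup>2
      = real n * (a\<^sup>2 + (real n - 1) * (\<mu> / p)\<^sup>2)"
    using a0 p0 unfolding a2n by (simp add: field_simps power2_eq_square)
  have nn: "real n - 1 \<ge> 0" using n by simp
  have "real n * (a\<^sup>2 + (real n - 1) * (\<mu> / p)\<^sup>2) \<le> real n * (1 + (real n - 1) * 1)"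
    using aa q2 nn by (intro mult_left_mono add_mono) auto
  also have "\<dots> = (real n)\<^sup>2" by (simp add: power2_eq_square)
  finally show "real n * (1 + (real n - 1) * \<mu>\<^sup>2 / f x ^ (2 * n)) * (f x)\<^sup>2 \<le> (real n)\<^sup>2"
    using eq unfolding a_def by linarith
qed

end
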